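(* Let $f:\mathcal{P}_2(H)\to U$ and $X_0\in L^2(\Omega,H)$ with $\mathcal{L}(X_0)=\sum_{k=1}^Np_k\delta_{x_k}$, where $x_1,\dots,x_N\in H$ are distinct and $p_k>0$, $\sum_kp_k=1$. Assume the lift $\hat f(X)=f(\mathcal{L}(X))$ is Fréchet differentiable at $X_0$ with $D\hat f(X_0)\in\Lambda_2^{\mathbb{P}}(H,U)$. Then for every $k$, every $A\in\mathcal{F}$ and $u\in H$, $$D\hat f(X_0)(\mathbf{1}_{A\cap\{X_0=x_k\}}u)=\mathbb{P}(A\mid X_0=x_k)\,D\hat f(X_0)(\mathbf{1}_{\{X_0=x_k\}}u).$$
   Context: $(\Omega,\mathcal{F},\mathbb{P})$ is a complete atomless probability space, $\Omega$ Polish with Borel $\sigma$-field; $H,U$ separable real Hilbert spaces. $\mathbb{P}(A\mid X_0=x_k)=\mathbb{P}(A\cap\{X_0=x_k\})/p_k$. For bounded linear $L:L^2(\Omega,H)\to U$, $|\!|\!|L|\!|\!|_{2,\mathbb{P}}:=\sup\{\sum_i\|L(\mathbf{1}_{A_i}x_i)\|_U:A_i\in\mathcal{F}$ pairwise disjoint, $x_i\in H$, $\mathbb{E}\|\sum_i\mathbf{1}_{A_i}x_i\|_H^2\le1\}$, and $\Lambda_2^{\mathbb{P}}(H,U)$ is the set of such $L$ with finite norm. *)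

theory Defs
  imports "HOL-Probability.Probability"
begin

definition atomless :: "'w measure \<Rightarrow> bool" where
  "atomless M \<longleftrightarrow> (\<forall>A\<in>sets M. 0 < measure M A \<longrightarrow>
      (\<exists>B\<in>sets M. B \<subseteq> A \<and> 0 < measure M B \<and> measure M B < measure M A))"

definition L2 :: "'w measure \<Rightarrow> ('w \<Rightarrow> 'h::{real_normed_vector, second_countable_topology}) set" where
  "L2 M = {X. X \<in> borel_measurable M \<and> integrable M (\<lambda>w. (norm (X w))\<^sup>2)}"

definition L2norm :: "'w measure \<Rightarrow> ('w \<Rightarrow> 'h::real_normed_vector) \<Rightarrow> real" where
  "L2norm M X = sqrt (\<integral>w. (norm (X w))\<^sup>2 \<partial>M)"

text \<open>Bounded linear maps L^2(Omega,H) -> U, given on representatives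
  (well defined on a.e.-classes).\<close>
definition bounded_linear_L2 ::
  "'w measure \<Rightarrow> (('w \<Rightarrow> 'h::{real_normed_vector, second_countable_topology}) \<Rightarrow> 'u::real_normed_vector) \<Rightarrow> bool" where
  "bounded_linear_L2 M L \<longleftrightarrow>
     (\<forall>X\<in>L2 M. \<forall>Y\<in>L2 M. L (\<lambda>w. X w + Y w) = L X + L Y) \<and>
     (\<forall>X\<in>L2 M. \<forall>c::real. L (\<lambda>w. c *\<^sub>R X w) = c *\<^sub>R L X) \<and>
     (\<forall>X\<in>L2 M. \<forall>Y\<in>L2 M. (AE w in M. X w = Y w) \<longrightarrow> L X = L Y) \<and>
     (\<exists>C. \<forall>X\<in>L2 M. norm (L X) \<le> C * L2norm M X)"

definition frechet_L2 ::
  "'w measure \<Rightarrow> (('w \<Rightarrow> 'h::{real_normed_vector, second_countable_topology}) \<Rightarrow> 'u::real_normed_vector)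
     \<Rightarrow> ('w \<Rightarrow> 'h) \<Rightarrow> (('w \<Rightarrow> 'h) \<Rightarrow> 'u) \<Rightarrow> bool" where
  "frechet_L2 M F X0 L \<longleftrightarrow> X0 \<in> L2 M \<and> bounded_linear_L2 M L \<and>
     (\<forall>e>0. \<exists>d>0. \<forall>X\<in>L2 M. L2norm M (\<lambda>w. X w - X0 w) < d \<longrightarrow>
        norm (F X - F X0 - L (\<lambda>w. X w - X0 w)) \<le> e * L2norm M (\<lambda>w. X w - X0 w))"

text \<open>Membership in Lambda_2^P(H,U): finiteness of the triple norm
  (supremum over finite families of pairwise disjoint events).\<close>
definition Lambda2 ::
  "'w measure \<Rightarrow> (('w \<Rightarrow> 'h::{real_normed_vector, second_countable_topology}) \<Rightarrow> 'u::real_normed_vector) \<Rightarrow> bool" where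
  "Lambda2 M L \<longleftrightarrow> bounded_linear_L2 M L \<and>
     (\<exists>C. \<forall>n::nat. \<forall>A::nat \<Rightarrow> 'w set. \<forall>x::nat \<Rightarrow> 'h.
        (\<forall>i<n. A i \<in> sets M) \<and> disjoint_family_on A {..<n} \<and>
        (\<integral>w. (norm (\<Sum>i<n. indicator (A i) w *\<^sub>R x i))\<^sup>2 \<partial>M) \<le> 1 \<longrightarrow>
        (\<Sum>i<n. norm (L (\<lambda>w. indicator (A i) w *\<^sub>R x i))) \<le> C)"

end

theory Submission
  imports Defs
begin

lemma (in prob_space) atomless_small_pow:
  assumes at: "atomless M" and A: "A \<in> events" "prob A > 0"
  shows "\<exists>B\<in>events. B \<subseteq> A \<and> 0 < prob B \<and> prob B \<le> prob A * (1/2)^n"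
proof (induction n)
  case 0 then show ?case using A by auto
next
  case (Suc n)
  then obtain B where B: "B \<in> events" "B \<subseteq> A" "0 < prob B" "prob B \<le> prob A * (1/2)^n" by auto
  then obtain B' where B': "B' \<in> events" "B' \<subseteq> B" "0 < prob B'" "prob B' < prob B"
    using at unfolding atomless_def by blast
  show ?case
  proof (cases "prob B' \<le> prob B / 2")
    case True then show ?thesis using B B' by (intro bexI[of _ B']) auto
  next
    case False
    have d: "prob (B - B') = prob B - prob B'" using B B' finite_measure_Diff by auto
    show ?thesis using B B' False d by (intro bexI[of _ "B - B'"]) auto
  qed
qed

lemma (in prob_space) atomless_small:
  assumes at: "atomless M" and A: "A \<in> events" "prob A > 0" and e: "e > 0"
  shows "\<exists>B\<in>events. B \<subseteq> A \<and> 0 < prob B \<and> prob B \<le> e"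
proof -
  obtain n where n: "(1/2::real)^n < e" using real_arch_pow_inv[OF e, of "1/2"] by auto
  obtain B where B: "B\<in>events" "B \<subseteq> A" "0 < prob B" "prob B \<le> prob A * (1/2)^n"
    using atomless_small_pow[OF at A] by blast
  have "prob A * (1/2)^n \<le> 1 * (1/2)^n" by (intro mult_right_mono) auto
  then have "prob B \<le> e" using B(4) n by linarith
  then show ?thesis using B by (intro bexI[of _ B]) auto
qed

lemma (in prob_space) atomless_exact:
  assumes at: "atomless M" and A: "A \<in> events" and t: "0 \<le> t" "t \<le> prob A"
  shows "\<exists>B\<in>events. B \<subseteq> A \<and> prob B = t"
proof -
  define S where "S D = {E \<in> events. E \<subseteq> A - D \<and> prob D + prob E \<le> t}" for D
  define \<sigma> where "\<sigma> D = Sup (prob ` S D)" for D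
  have bdd: "bdd_above (prob ` S D)" for D by (auto intro!: bdd_aboveI[where M=1])
  have ex: "\<exists>E. E \<in> S D \<and> \<sigma> D \<le> 2 * prob E" if "D \<in> events" "prob D \<le> t" for D
  proof -
    have e: "{} \<in> S D" using that by (simp add: S_def)
    show ?thesis
    proof (cases "\<sigma> D \<le> 0")
      case True then show ?thesis using e by (intro exI[of _ "{}"]) auto
    next
      case False
      then have "\<sigma> D / 2 < Sup (prob ` S D)" by (simp add: \<sigma>_def)
      then obtain E where "E \<in> S D" "\<sigma> D / 2 < prob E"
        using less_cSup_iff[OF _ bdd, of D "\<sigma> D / 2"] e by auto
      then show ?thesis by (intro exI[of _ E]) auto
    qed
  qed
  define E where "E D = (SOME E. E \<in> S D \<and> \<sigma> D \<le> 2 * prob E)" for D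
  have Ep: "E D \<in> S D \<and> \<sigma> D \<le> 2 * prob (E D)" if "D \<in> events" "prob D \<le> t" for D
    unfolding E_def by (rule someI_ex[OF ex[OF that]])
  define B where "B n = ((\<lambda>D. D \<union> E D) ^^ n) {}" for n
  have B0: "B 0 = {}" and BS: "B (Suc n) = B n \<union> E (B n)" for n by (simp_all add: B_def)
  have inv: "B n \<in> events \<and> B n \<subseteq> A \<and> prob (B n) \<le> t" for n
  proof (induction n)
    case 0 then show ?case using t by (simp add: B0)
  next
    case (Suc n)
    then have "E (B n) \<in> S (B n)" using Ep by blast
    then have E1: "E (B n) \<in> events" "E (B n) \<subseteq> A - B n" "prob (B n) + prob (E (B n)) \<le> t"
      by (auto simp: S_def)
    have "prob (B (Suc n)) = prob (B n) + prob (E (B n))"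
      unfolding BS using Suc E1 by (intro finite_measure_Union) auto
    then show ?case using Suc E1 BS by auto
  qed
  have Ep2: "E (B n) \<in> S (B n)" "\<sigma> (B n) \<le> 2 * prob (E (B n))" for n using Ep inv by blast+
  have pS: "prob (B (Suc n)) = prob (B n) + prob (E (B n))" for n
    unfolding BS using inv Ep2 by (intro finite_measure_Union) (auto simp: S_def)
  have sumE: "(\<Sum>i<m. prob (E (B i))) = prob (B m)" for m
    by (induction m) (auto simp: B0 pS)
  define Bi where "Bi = (\<Union>n. B n)"
  have inc: "incseq B" by (rule incseq_SucI) (auto simp: BS)
  have Bi_ev: "Bi \<in> events" unfolding Bi_def using inv by auto
  have lim: "(\<lambda>n. prob (B n)) \<longlonglongrightarrow> prob Bi"
    unfolding Bi_def using inv inc by (intro finite_Lim_measure_incseq) auto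
  have Bit: "prob Bi \<le> t" using inv by (intro LIMSEQ_le_const2[OF lim]) auto
  have BiA: "Bi \<subseteq> A" unfolding Bi_def using inv by auto
  have Bn: "prob (B n) \<le> prob Bi" for n using Bi_ev by (intro finite_measure_mono) (auto simp: Bi_def)
  show ?thesis
  proof (cases "prob Bi = t")
    case True then show ?thesis using Bi_ev BiA by blast
  next
    case False
    then have lt: "prob Bi < t" using Bit by auto
    have "prob (A - Bi) = prob A - prob Bi" using A Bi_ev BiA finite_measure_Diff by auto
    then have "prob (A - Bi) > 0" using lt t by auto
    then obtain F where F: "F \<in> events" "F \<subseteq> A - Bi" "0 < prob F" "prob F \<le> t - prob Bi"
      using atomless_small[OF at _ _, of "A - Bi" "t - prob Bi"] A Bi_ev lt by auto
    have FS: "F \<in> S (B n)" for n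
      using F Bn[of n] unfolding S_def Bi_def by auto
    have sF: "prob F \<le> \<sigma> (B n)" for n unfolding \<sigma>_def
      by (rule cSup_upper[OF _ bdd]) (use FS in auto)
    have low: "prob F / 2 \<le> prob (E (B n))" for n using sF[of n] Ep2(2)[of n]
      by linarith
    have s1: "(\<Sum>i<m. prob F / 2) \<le> prob (B m)" for m
      unfolding sumE[symmetric] by (intro sum_mono low)
    have mm: "real m * (prob F / 2) \<le> 1" for m
    proof -
      have "prob (B m) \<le> 1" by (rule prob_le_1)
      moreover have "(\<Sum>i<m. prob F / 2) = real m * (prob F / 2)" by simp
      ultimately show ?thesis using s1[of m] by linarith
    qed
    obtain m where m: "2 / prob F < real m" using reals_Archimedean2 by blast
    have "2 < real m * prob F" using m F(3) by (simp add: field_simps)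
    then show ?thesis using mm[of m] by auto
  qed
qed


lemma additive_linear:
  fixes \<phi> :: "real \<Rightarrow> 'u::real_normed_vector"
  assumes p: "p > 0"
    and add: "\<And>a b. 0 \<le> a \<Longrightarrow> 0 \<le> b \<Longrightarrow> a + b \<le> p \<Longrightarrow> \<phi> (a+b) = \<phi> a + \<phi> b"
    and bnd: "\<And>t. 0 \<le> t \<Longrightarrow> t \<le> p \<Longrightarrow> norm (\<phi> t) \<le> K * sqrt t"
    and s: "0 \<le> s" "s \<le> p"
  shows "\<phi> s = (s/p) *\<^sub>R \<phi> p"
proof -
  define g where "g t = \<phi> t - (t/p) *\<^sub>R \<phi> p" for t
  have gadd: "g (a+b) = g a + g b" if "0 \<le> a" "0 \<le> b" "a + b \<le> p" for a b
    using add[OF that] unfolding g_def by (simp add: add_divide_distrib scaleR_add_left)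
  have gp: "g p = 0" using p by (simp add: g_def)
  have K0: "0 \<le> K"
  proof -
    have "0 \<le> K * sqrt p" using bnd[of p] p by (meson norm_ge_zero order_trans order_refl less_imp_le)
    then show ?thesis using p by (simp add: zero_le_mult_iff)
  qed
  have gb: "norm (g t) \<le> 2 * K * sqrt t" if t: "0 \<le> t" "t \<le> p" for t
  proof -
    have "norm (g t) \<le> norm (\<phi> t) + norm ((t/p) *\<^sub>R \<phi> p)" unfolding g_def by (rule norm_triangle_ineq4)
    also have "norm ((t/p) *\<^sub>R \<phi> p) = (t/p) * norm (\<phi> p)" using t p by simp
    also have "\<dots> \<le> (t/p) * (K * sqrt p)" using bnd[of p] p t by (intro mult_left_mono) auto
    also have "(t/p) * (K * sqrt p) = K * (sqrt t * (sqrt t / sqrt p))"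
      using t p by (simp add: field_simps real_sqrt_mult[symmetric])
    also have "\<dots> \<le> K * (sqrt t * 1)"
      using t p K0 by (intro mult_left_mono) (auto simp: divide_le_eq_1)
    finally show ?thesis using bnd[OF t] by simp
  qed
  have g0: "g 0 = 0" using gadd[of 0 0] p by simp
  have gmul: "g (real j * h) = real j *\<^sub>R g h" if "0 \<le> h" "real j * h \<le> p" for j h
    using that
  proof (induction j)
    case 0 then show ?case by (simp add: g0)
  next
    case (Suc j)
    have "real j * h \<le> real (Suc j) * h" using Suc.prems by (simp add: mult_right_mono)
    then have IH: "g (real j * h) = real j *\<^sub>R g h" using Suc by simp
    have "g (real (Suc j) * h) = g (real j * h + h)" by (simp add: algebra_simps)
    also have "\<dots> = g (real j * h) + g h" using Suc.prems by (intro gadd) (auto simp: algebra_simps)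
    finally show ?case using IH by (simp add: algebra_simps)
  qed
  have key: "norm (g s) \<le> 2 * K * sqrt (s / real N)" if N: "N \<ge> 1" and s0: "s > 0" for N :: nat
  proof -
    define h where "h = s / real N"
    have h0: "h > 0" using N s0 by (simp add: h_def)
    have gs: "g s = real N *\<^sub>R g h"
      using gmul[of h N] h0 N s by (simp add: h_def)
    define j where "j = nat \<lfloor>p / h\<rfloor>"
    have jle: "real j * h \<le> p"
    proof -
      have "real j \<le> p / h" unfolding j_def using h0 p
        by (simp add: of_nat_nat) 
      then show ?thesis using h0 by (simp add: le_divide_eq)
    qed
    have jgt: "p < real j * h + h"
    proof -
      have "p / h < real j + 1" unfolding j_def using h0 p
        by (simp add: of_nat_nat)
      then show ?thesis using h0 by (simp add: divide_less_eq algebra_simps)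
    qed
    have jN: "real N \<le> real j"
    proof -
      have "real N = s / h" using h0 N s0 by (simp add: h_def)
      also have "\<dots> \<le> p / h" using s h0 by (simp add: divide_right_mono)
      finally have "real N \<le> p / h" .
      then have "N \<le> \<lfloor>p / h\<rfloor>" by (simp add: le_floor_iff)
      then show ?thesis unfolding j_def by simp
    qed
    define r where "r = p - real j * h"
    have r: "0 \<le> r" "r \<le> h" "r \<le> p" using jle jgt h0 unfolding r_def by auto
    have "g p = g (real j * h) + g r"
      using gadd[of "real j * h" r] r jle h0 unfolding r_def by simp
    then have "real j *\<^sub>R g h = - g r" using gp gmul[of h j] h0 jle by (simp add: eq_neg_iff_add_eq_0)
    then have "real j * norm (g h) = norm (g r)" by (metis norm_minus_cancel norm_scaleR abs_of_nat)
    also have "\<dots> \<le> 2 * K * sqrt r" using gb r by simp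
    also have "\<dots> \<le> 2 * K * sqrt h" using K0 r by (intro mult_left_mono) auto
    finally have A: "real j * norm (g h) \<le> 2 * K * sqrt h" .
    have "norm (g s) = real N * norm (g h)" using gs by simp
    also have "\<dots> \<le> real j * norm (g h)" using jN by (intro mult_right_mono) auto
    finally show ?thesis using A by (simp add: h_def)
  qed
  have "g s = 0"
  proof (cases "s = 0")
    case True then show ?thesis by (simp add: g0)
  next
    case False
    then have s0: "s > 0" using s by auto
    show ?thesis
    proof (rule ccontr)
      assume "g s \<noteq> 0"
      then have c: "norm (g s) > 0" by simp
      obtain N :: nat where N: "4 * K^2 * s / (norm (g s))^2 + 1 < real N" using reals_Archimedean2 by blast
      have N1: "N \<ge> 1" using N c K0 s0
        by (smt (verit) divide_nonneg_nonneg of_nat_0 of_nat_1 of_nat_le_iff power2_less_0 zero_le_mult_iff)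
      have "4 * K^2 * s / (norm (g s))^2 < real N" using N by linarith
      then have "4 * K^2 * s < real N * (norm (g s))^2" using c by (simp add: divide_less_eq)
      then have lt: "4 * K^2 * (s / real N) < (norm (g s))^2" using N1
        by (simp add: field_simps)
      have "(2 * K * sqrt (s / real N))^2 = 4 * K^2 * (s / real N)"
        using s0 by (simp add: power_mult_distrib)
      then have "(2 * K * sqrt (s / real N))^2 < (norm (g s))^2" using lt by simp
      then have "2 * K * sqrt (s / real N) < norm (g s)"
        using c power_less_imp_less_base[of _ 2 "norm (g s)"] by fastforce
      then show False using key[OF N1 s0] by simp
    qed
  qed
  then show ?thesis by (simp add: g_def)
qed


lemma L2_indicator:
  assumes "finite_measure M" "B \<in> sets M"
  shows "(\<lambda>w. indicator B w *\<^sub>R (u::'h::{real_normed_vector, second_countable_topology})) \<in> L2 M"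
  unfolding L2_def
proof (intro CollectI conjI)
  show "(\<lambda>w. indicator B w *\<^sub>R u) \<in> borel_measurable M" using assms(2) by measurable
  show "integrable M (\<lambda>w. (norm (indicator B w *\<^sub>R u))\<^sup>2)"
  proof (rule finite_measure.integrable_const_bound[OF assms(1), where B="(norm u)^2"])
    show "AE x in M. norm ((norm (indicator B x *\<^sub>R u))\<^sup>2) \<le> (norm u)\<^sup>2"
      by (auto simp: indicator_def)
    show "(\<lambda>w. (norm (indicator B w *\<^sub>R u))\<^sup>2) \<in> borel_measurable M" using assms(2) by measurable
  qed
qed

lemma L2_scale:
  assumes "X \<in> L2 M"
  shows "(\<lambda>w. c *\<^sub>R X w) \<in> L2 M"
proof -
  have "(\<lambda>w. (norm (c *\<^sub>R X w))\<^sup>2) = (\<lambda>w. c^2 * (norm (X w))\<^sup>2)"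
    by (simp add: power_mult_distrib)
  then show ?thesis using assms unfolding L2_def by (auto intro!: borel_measurable_scaleR)
qed

lemma sq_tri: "(norm (a + b))\<^sup>2 \<le> 2 * (norm a)\<^sup>2 + 2 * (norm (b::'a::real_normed_vector))\<^sup>2"
proof -
  have "norm (a+b) \<le> norm a + norm b" by (rule norm_triangle_ineq)
  then have "(norm (a+b))^2 \<le> (norm a + norm b)^2" by (intro power_mono) auto
  also have "\<dots> \<le> 2 * (norm a)\<^sup>2 + 2 * (norm b)\<^sup>2"
    using sum_squares_ge_zero[of "norm a - norm b" 0] by (simp add: power2_eq_square algebra_simps)
  finally show ?thesis .
qed

lemma L2_add:
  assumes "X \<in> L2 M" "Y \<in> L2 M"
  shows "(\<lambda>w. X w + Y w) \<in> L2 M"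
  using assms unfolding L2_def
proof (intro CollectI conjI)
  show "(\<lambda>w. X w + Y w) \<in> borel_measurable M" using assms unfolding L2_def by auto
  have "integrable M (\<lambda>w. 2 * (norm (X w))\<^sup>2 + 2 * (norm (Y w))\<^sup>2)"
    using assms unfolding L2_def by auto
  then show "integrable M (\<lambda>w. (norm (X w + Y w))\<^sup>2)"
    by (rule Bochner_Integration.integrable_bound)
       (use assms in \<open>auto simp: L2_def intro!: AE_I2 order_trans[OF sq_tri]\<close>)
qed

lemma L2norm_ind:
  assumes "prob_space M" "B \<in> sets M" "t \<ge> 0"
  shows "L2norm M (\<lambda>w. t *\<^sub>R (indicator B w *\<^sub>R (u::'h::real_normed_vector))) = t * norm u * sqrt (measure M B)"
proof -
  interpret prob_space M by fact
  have "(\<lambda>w. (norm (t *\<^sub>R (indicator B w *\<^sub>R u)))\<^sup>2) = (\<lambda>w. indicator B w * (t * norm u)^2)"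
    by (rule ext, case_tac "w \<in> B") (simp_all add: power_mult_distrib)
  then have "(\<integral>w. (norm (t *\<^sub>R (indicator B w *\<^sub>R u)))\<^sup>2 \<partial>M) = measure M B * (t * norm u)^2"
    using assms by simp
  then show ?thesis unfolding L2norm_def using assms
    by (simp add: real_sqrt_mult)
qed

lemma (in prob_space) distr_shift:
  fixes X0 :: "'a \<Rightarrow> 'h::{real_normed_vector, second_countable_topology}"
  assumes X0: "X0 \<in> borel_measurable M" and C: "C = {w\<in>space M. X0 w = c}" "C \<in> events"
    and B: "B \<in> events" "B \<subseteq> C" and S: "S \<in> sets borel"
  shows "prob ((\<lambda>w. X0 w + t *\<^sub>R (indicator B w *\<^sub>R u)) -` S \<inter> space M)
     = prob ((X0 -` S \<inter> space M) - C) + (if c \<in> S then prob C - prob B else 0)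
       + (if c + t *\<^sub>R u \<in> S then prob B else 0)"
proof -
  define P1 where "P1 = (X0 -` S \<inter> space M) - C"
  define P2 where "P2 = (if c \<in> S then C - B else {})"
  define P3 where "P3 = (if c + t *\<^sub>R u \<in> S then B else {})"
  have eq: "(\<lambda>w. X0 w + t *\<^sub>R (indicator B w *\<^sub>R u)) -` S \<inter> space M = P1 \<union> P2 \<union> P3"
  proof (intro set_eqI)
    fix w
    consider "w \<in> B" | "w \<in> C - B" | "w \<notin> C" by blast
    then show "w \<in> (\<lambda>w. X0 w + t *\<^sub>R (indicator B w *\<^sub>R u)) -` S \<inter> space M \<longleftrightarrow> w \<in> P1 \<union> P2 \<union> P3"
    proof cases
      case 1
      then have "X0 w = c" "w \<in> space M" "w \<in> C" using B C by auto
      then show ?thesis using 1 unfolding P1_def P2_def P3_def by auto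
    next
      case 2
      then have "X0 w = c" "w \<in> space M" "w \<notin> B" using B C by auto
      then show ?thesis using 2 unfolding P1_def P2_def P3_def by auto
    next
      case 3
      then have "w \<notin> B" using B by auto
      then show ?thesis using 3 B unfolding P1_def P2_def P3_def by auto
    qed
  qed
  have m1: "P1 \<in> events" unfolding P1_def using X0 S C by (intro sets.Diff measurable_sets) auto
  have m2: "P2 \<in> events" unfolding P2_def using B C by auto
  have m3: "P3 \<in> events" unfolding P3_def using B by auto
  have "prob (P1 \<union> P2 \<union> P3) = prob (P1 \<union> P2) + prob P3"
    using m1 m2 m3 B by (intro finite_measure_Union) (auto simp: P1_def P2_def P3_def)
  also have "prob (P1 \<union> P2) = prob P1 + prob P2"
    using m1 m2 by (intro finite_measure_Union) (auto simp: P1_def P2_def)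
  also have "prob P2 = (if c \<in> S then prob C - prob B else 0)"
    unfolding P2_def using B C finite_measure_Diff by auto
  also have "prob P3 = (if c + t *\<^sub>R u \<in> S then prob B else 0)" unfolding P3_def by auto
  finally show ?thesis unfolding eq P1_def by simp
qed

lemma (in prob_space) distr_shift_eq:
  fixes X0 :: "'a \<Rightarrow> 'h::{real_normed_vector, second_countable_topology}"
  assumes X0: "X0 \<in> borel_measurable M" and C: "C = {w\<in>space M. X0 w = c}" "C \<in> events"
    and B: "B \<in> events" "B \<subseteq> C" and B': "B' \<in> events" "B' \<subseteq> C" and pB: "prob B = prob B'"
  shows "distr M borel (\<lambda>w. X0 w + t *\<^sub>R (indicator B w *\<^sub>R u))
       = distr M borel (\<lambda>w. X0 w + t *\<^sub>R (indicator B' w *\<^sub>R u))"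
proof (rule measure_eqI)
  show "sets (distr M borel (\<lambda>w. X0 w + t *\<^sub>R (indicator B w *\<^sub>R u))) =
    sets (distr M borel (\<lambda>w. X0 w + t *\<^sub>R (indicator B' w *\<^sub>R u)))" by simp
  fix S assume "S \<in> sets (distr M borel (\<lambda>w. X0 w + t *\<^sub>R (indicator B w *\<^sub>R u)))"
  then have S: "S \<in> sets borel" by simp
  have mB: "(\<lambda>w. X0 w + t *\<^sub>R (indicator B w *\<^sub>R u)) \<in> borel_measurable M" using X0 B by measurable
  have mB': "(\<lambda>w. X0 w + t *\<^sub>R (indicator B' w *\<^sub>R u)) \<in> borel_measurable M" using X0 B' by measurable
  show "emeasure (distr M borel (\<lambda>w. X0 w + t *\<^sub>R (indicator B w *\<^sub>R u))) S =
        emeasure (distr M borel (\<lambda>w. X0 w + t *\<^sub>R (indicator B' w *\<^sub>R u))) S"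
    unfolding emeasure_distr[OF mB S] emeasure_distr[OF mB' S] emeasure_eq_measure
    using distr_shift[OF X0 C B S, of t u] distr_shift[OF X0 C B' S, of t u] pB
    by simp
qed


theorem lemma3p2:
  fixes B :: "'w::polish_space measure"
    and M :: "'w measure"
    and f :: "'h::{real_inner, complete_space, second_countable_topology} measure \<Rightarrow>
              'u::{real_inner, complete_space, second_countable_topology}"
    and X0 :: "'w \<Rightarrow> 'h"
    and N :: nat and x :: "nat \<Rightarrow> 'h" and p :: "nat \<Rightarrow> real"
    and L :: "('w \<Rightarrow> 'h) \<Rightarrow> 'u"
    and k :: nat and A :: "'w set" and u :: 'h
  assumes Borel: "sets B = sets borel"
    and M_def: "M = completion B"
    and prob: "prob_space M"
    and atoml: "atomless M"
    and X0_L2: "X0 \<in> L2 M"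
    and x_dist: "inj_on x {1..N}"
    and p_pos: "\<And>j. j \<in> {1..N} \<Longrightarrow> p j > 0"
    and p_sum: "(\<Sum>j=1..N. p j) = 1"
    and law: "\<And>S. S \<in> sets borel \<Longrightarrow>
                measure (distr M borel X0) S = (\<Sum>j=1..N. p j * indicator S (x j))"
    and diff: "frechet_L2 M (\<lambda>X. f (distr M borel X)) X0 L"
    and LamL: "Lambda2 M L"
    and k: "k \<in> {1..N}"
    and A: "A \<in> sets M"
  shows "L (\<lambda>w. indicator (A \<inter> {w\<in>space M. X0 w = x k}) w *\<^sub>R u)
         = (measure M (A \<inter> {w\<in>space M. X0 w = x k}) / p k)
             *\<^sub>R L (\<lambda>w. indicator {w\<in>space M. X0 w = x k} w *\<^sub>R u)"
proof -
  interpret prob_space M by (rule prob)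
  have X0m: "X0 \<in> borel_measurable M" using X0_L2 by (simp add: L2_def)
  define C where "C = {w\<in>space M. X0 w = x k}"
  have Cpre: "X0 -` {x k} \<inter> space M = C" by (auto simp: C_def)
  have Cev: "C \<in> events" unfolding Cpre[symmetric] by (rule measurable_sets[OF X0m]) simp
  have pC: "prob C = p k"
  proof -
    have "measure (distr M borel X0) {x k} = (\<Sum>j=1..N. p j * indicator {x k} (x j))" using law by simp
    also have "\<dots> = (\<Sum>j=1..N. if j = k then p j else 0)"
    proof (rule sum.cong[OF refl])
      fix j assume j: "j \<in> {1..N}"
      show "p j * indicator {x k} (x j) = (if j = k then p j else 0)"
      proof (cases "j = k")
        case False
        then have "x j \<noteq> x k" using inj_on_eq_iff[OF x_dist j k] by simp
        then show ?thesis using False by simp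
      qed simp
    qed
    also have "\<dots> = p k" using k by simp
    finally have "measure (distr M borel X0) {x k} = p k" .
    moreover have "measure (distr M borel X0) {x k} = prob (X0 -` {x k} \<inter> space M)"
      by (rule measure_distr[OF X0m]) simp
    ultimately show ?thesis using Cpre by simp
  qed
  have pk: "p k > 0" using p_pos k by blast
  have BL: "bounded_linear_L2 M L" using diff[unfolded frechet_L2_def, THEN conjunct2, THEN conjunct1] .
  have fr: "\<forall>e>0. \<exists>d>0. \<forall>X\<in>L2 M. L2norm M (\<lambda>w. X w - X0 w) < d \<longrightarrow>
        norm (f (distr M borel X) - f (distr M borel X0) - L (\<lambda>w. X w - X0 w)) \<le> e * L2norm M (\<lambda>w. X w - X0 w)"
    using diff[unfolded frechet_L2_def, THEN conjunct2, THEN conjunct2] .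
  have Ladd: "\<And>X Y. X\<in>L2 M \<Longrightarrow> Y\<in>L2 M \<Longrightarrow> L (\<lambda>w. X w + Y w) = L X + L Y"
    and Lsc: "\<And>X c. X\<in>L2 M \<Longrightarrow> L (\<lambda>w. c *\<^sub>R X w) = c *\<^sub>R L X"
    using BL[unfolded bounded_linear_L2_def, THEN conjunct1]
      BL[unfolded bounded_linear_L2_def, THEN conjunct2, THEN conjunct1] by blast+
  obtain Cst where Lbd: "\<And>X. X\<in>L2 M \<Longrightarrow> norm (L X) \<le> Cst * L2norm M X"
    using BL[unfolded bounded_linear_L2_def, THEN conjunct2, THEN conjunct2, THEN conjunct2] by blast
  define Y where "Y (B::'w set) = (\<lambda>w. indicator B w *\<^sub>R u)" for B
  have YL2: "Y D \<in> L2 M" if "D \<in> events" for D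
    unfolding Y_def by (rule L2_indicator[OF finite_measure that])
  have hu: "0 < norm u + 1" using norm_ge_zero[of u] by linarith
  have inv: "L (Y B1) = L (Y B2)" if B1: "B1 \<in> events" "B1 \<subseteq> C" and B2: "B2 \<in> events" "B2 \<subseteq> C"
    and pB: "prob B1 = prob B2" for B1 B2
  proof -
    have main: "norm (L (Y B1) - L (Y B2)) \<le> 2 * e * norm u" if e: "e > 0" for e
    proof -
      obtain d where d: "d > 0" and dX: "\<And>X. X\<in>L2 M \<Longrightarrow> L2norm M (\<lambda>w. X w - X0 w) < d \<Longrightarrow>
        norm (f (distr M borel X) - f (distr M borel X0) - L (\<lambda>w. X w - X0 w)) \<le> e * L2norm M (\<lambda>w. X w - X0 w)"
        using fr e by blast
      define t where "t = d / (norm u + 1)"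
      have t0: "t > 0" unfolding t_def using d by (intro divide_pos_pos) (auto intro: add_nonneg_pos)
      have tu: "t * norm u < d"
      proof -
        have "t * norm u = d * (norm u / (norm u + 1))" by (simp add: t_def)
        also have "\<dots> < d * 1" using d hu by (intro mult_strict_left_mono) (auto simp: divide_less_eq)
        finally show ?thesis by simp
      qed
      have est: "norm (f (distr M borel (\<lambda>w. X0 w + t *\<^sub>R Y D w)) - f (distr M borel X0) - t *\<^sub>R L (Y D))
          \<le> e * (t * norm u)" if D: "D \<in> events" for D
      proof -
        have XL2: "(\<lambda>w. X0 w + t *\<^sub>R Y D w) \<in> L2 M" by (intro L2_add X0_L2 L2_scale YL2 D)
        have dif: "(\<lambda>w. (X0 w + t *\<^sub>R Y D w) - X0 w) = (\<lambda>w. t *\<^sub>R Y D w)" by auto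
        have n: "L2norm M (\<lambda>w. t *\<^sub>R Y D w) = t * norm u * sqrt (prob D)"
          unfolding Y_def using L2norm_ind[OF prob D, of t u] t0 by simp
        have "sqrt (prob D) \<le> 1" by simp
        then have nle: "L2norm M (\<lambda>w. t *\<^sub>R Y D w) \<le> t * norm u"
          unfolding n using t0 by (simp add: mult_left_le)
        have "norm (f (distr M borel (\<lambda>w. X0 w + t *\<^sub>R Y D w)) - f (distr M borel X0) - L (\<lambda>w. t *\<^sub>R Y D w))
            \<le> e * L2norm M (\<lambda>w. t *\<^sub>R Y D w)"
          using dX[OF XL2] nle tu unfolding dif by simp
        also have "\<dots> \<le> e * (t * norm u)" using nle e by (intro mult_left_mono) auto
        finally show ?thesis using Lsc[OF YL2[OF D]] by simp
      qed
      have same: "distr M borel (\<lambda>w. X0 w + t *\<^sub>R Y B1 w) = distr M borel (\<lambda>w. X0 w + t *\<^sub>R Y B2 w)"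
        unfolding Y_def by (rule distr_shift_eq[OF X0m C_def Cev B1 B2 pB])
      define Fb where "Fb = f (distr M borel (\<lambda>w. X0 w + t *\<^sub>R Y B1 w))"
      have e1: "norm (Fb - f (distr M borel X0) - t *\<^sub>R L (Y B1)) \<le> e * (t * norm u)"
        unfolding Fb_def by (rule est[OF B1(1)])
      have e2: "norm (Fb - f (distr M borel X0) - t *\<^sub>R L (Y B2)) \<le> e * (t * norm u)"
        unfolding Fb_def same by (rule est[OF B2(1)])
      have eqd: "t *\<^sub>R (L (Y B1) - L (Y B2)) = (Fb - f (distr M borel X0) - t *\<^sub>R L (Y B2)) - (Fb - f (distr M borel X0) - t *\<^sub>R L (Y B1))"
        by (simp add: algebra_simps)
      have "norm (t *\<^sub>R (L (Y B1) - L (Y B2))) \<le> norm (Fb - f (distr M borel X0) - t *\<^sub>R L (Y B2)) + norm (Fb - f (distr M borel X0) - t *\<^sub>R L (Y B1))"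
        unfolding eqd by (rule norm_triangle_ineq4)
      then have "norm (t *\<^sub>R (L (Y B1) - L (Y B2))) \<le> e * (t * norm u) + e * (t * norm u)"
        using e1 e2 by linarith
      moreover have "norm (t *\<^sub>R (L (Y B1) - L (Y B2))) = t * norm (L (Y B1) - L (Y B2))"
        using t0 by simp
      ultimately have "t * norm (L (Y B1) - L (Y B2)) \<le> t * (2 * e * norm u)" by (simp add: algebra_simps)
      then show ?thesis using t0 by simp
    qed
    show ?thesis
    proof (rule ccontr)
      assume "L (Y B1) \<noteq> L (Y B2)"
      then have a: "norm (L (Y B1) - L (Y B2)) > 0" by simp
      define e where "e = norm (L (Y B1) - L (Y B2)) / (4 * (norm u + 1))"
      have e0: "e > 0" unfolding e_def using a by (intro divide_pos_pos) (auto intro: add_nonneg_pos)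
      have "2 * e * norm u = norm (L (Y B1) - L (Y B2)) * (norm u / (2 * (norm u + 1)))"
        unfolding e_def by (cases "norm u + 1 = 0") (simp_all add: field_simps)
      also have "\<dots> < norm (L (Y B1) - L (Y B2)) * 1"
        using a hu by (intro mult_strict_left_mono) (auto simp: divide_less_eq)
      finally show False using main[OF e0] by simp
    qed
  qed
  have Yun: "Y (B1 \<union> B2) = (\<lambda>w. Y B1 w + Y B2 w)" if "B1 \<inter> B2 = {}" for B1 B2
    using that unfolding Y_def by (auto simp: fun_eq_iff split: split_indicator)
  have Ybd: "norm (L (Y D)) \<le> (Cst * norm u) * sqrt (prob D)" if D: "D \<in> events" for D
  proof -
    have "L2norm M (Y D) = norm u * sqrt (prob D)"
      using L2norm_ind[OF prob D, of 1 u] by (simp add: Y_def)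
    then show ?thesis using Lbd[OF YL2[OF D]] by (simp add: mult.assoc)
  qed
  have ex: "\<exists>B. B \<in> events \<and> B \<subseteq> C \<and> prob B = t" if "0 \<le> t" "t \<le> p k" for t
    using atomless_exact[OF atoml Cev, of t] that pC by auto
  define \<phi> where "\<phi> t = L (Y (SOME B. B \<in> events \<and> B \<subseteq> C \<and> prob B = t))" for t
  have \<phi>eq: "\<phi> (prob D) = L (Y D)" if D: "D \<in> events" "D \<subseteq> C" for D
  proof -
    have "prob D \<le> p k" using finite_measure_mono[OF D(2) Cev] pC by simp
    then have "\<exists>B. B \<in> events \<and> B \<subseteq> C \<and> prob B = prob D" using ex by simp
    define B0 where "B0 = (SOME B. B \<in> events \<and> B \<subseteq> C \<and> prob B = prob D)"
    have B0: "B0 \<in> events \<and> B0 \<subseteq> C \<and> prob B0 = prob D"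
      unfolding B0_def by (rule someI_ex) fact
    have "\<phi> (prob D) = L (Y B0)" unfolding \<phi>_def B0_def ..
    also have "\<dots> = L (Y D)" by (rule inv) (use B0 D in auto)
    finally show ?thesis .
  qed
  have add: "\<phi> (a + b) = \<phi> a + \<phi> b" if ab: "0 \<le> a" "0 \<le> b" "a + b \<le> p k" for a b
  proof -
    obtain B1 where B1: "B1 \<in> events" "B1 \<subseteq> C" "prob B1 = a" using ex[of a] ab by auto
    have "prob (C - B1) = p k - a" using finite_measure_Diff[OF Cev B1(1) B1(2)] pC B1 by simp
    then obtain B2 where B2: "B2 \<in> events" "B2 \<subseteq> C - B1" "prob B2 = b"
      using atomless_exact[OF atoml _, of "C - B1" b] Cev B1 ab by auto
    have d: "B1 \<inter> B2 = {}" using B2 by auto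
    have B2C: "B2 \<subseteq> C" using B2 by auto
    have pu: "prob (B1 \<union> B2) = a + b" using finite_measure_Union[OF B1(1) B2(1) d] B1 B2 by simp
    have "\<phi> (a + b) = L (Y (B1 \<union> B2))" using \<phi>eq[of "B1 \<union> B2"] pu B1 B2 by auto
    also have "\<dots> = L (Y B1) + L (Y B2)" unfolding Yun[OF d] by (rule Ladd[OF YL2 YL2]) (use B1 B2 in auto)
    also have "\<dots> = \<phi> a + \<phi> b" using \<phi>eq[of B1] \<phi>eq[OF B2(1) B2C] B1 B2 by auto
    finally show ?thesis .
  qed
  have bnd: "norm (\<phi> t) \<le> (Cst * norm u) * sqrt t" if tt: "0 \<le> t" "t \<le> p k" for t
  proof -
    obtain D where D: "D \<in> events" "D \<subseteq> C" "prob D = t" using ex[OF tt] by auto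
    show ?thesis using Ybd[OF D(1)] \<phi>eq[OF D(1,2)] D(3) by simp
  qed
  have ACev: "A \<inter> C \<in> events" using A Cev by auto
  have s: "0 \<le> prob (A \<inter> C)" "prob (A \<inter> C) \<le> p k"
    using finite_measure_mono[OF _ Cev, of "A \<inter> C"] pC by auto
  have "\<phi> (prob (A \<inter> C)) = (prob (A \<inter> C) / p k) *\<^sub>R \<phi> (p k)"
    by (rule additive_linear[OF pk add bnd s]) auto
  then have "L (Y (A \<inter> C)) = (prob (A \<inter> C) / p k) *\<^sub>R L (Y C)"
    using \<phi>eq[OF ACev] \<phi>eq[OF Cev] pC by auto
  then show ?thesis unfolding Y_def C_def .
qed

end
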